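(* Let $T=(V,E,\rho,\ell)$ be a tree with $|\partial T|\ge2$ and let $(X_\gamma)_{\gamma\in\Gamma_T}$ be a $\mathbf{P}_t$-chain on $T$. For $j\in\mathcal{S}$ let $N_j$ be the number of leaves of $T$ in state $j$. Then for all $i,j\in\mathcal{S}$, $$\mathrm{var}_i(N_j)\le\frac14|\partial T|+2(q_i\vee1)\,\mathrm{Spr}(T)\,|\partial T|^2,$$ where $\mathrm{var}_i$ denotes variance under $\mathbb{P}^i$.
   Context: A tree $T=(V,E,\rho,\ell)$ is a finite rooted tree with positive edge lengths, viewed as a metric object with point set $\Gamma_T$ and leaf set $\partial T$. Markov process on countable $\mathcal{S}$ with transition matrices $\mathbf{P}_t=(p_{ij}(t))$ and stable conservative $Q$-matrix, $q_i=-q_{ii}=\sum_{j\ne i}q_{ij}<\infty$. A $\mathbf{P}_t$-chain on $T$: root state $X_\rho$, then along each edge $(u,v)$ run the chain from $X_u$ for time $\ell_{(u,v)}$, independently on outgoing edges given the branching state; $\mathbb{P}^i$ is the law with $X_\rho=i$. Spread: $\ell_{xy}$ is the length of the common part of the paths from $\rho$ to leaves $x$ and $y$, and $\mathrm{Spr}(T)=\frac{\sum_{x\ne y}(\ell_{xy}\wedge1)}{|\partial T|(|\partial T|-1)}$ (sum over ordered pairs of distinct leaves). *)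

theory Defs
  imports "HOL-Probability.Probability"
begin

text \<open>A finite rooted tree is given by a finite vertex set V, a root rho in V and a
parent map par (with par rho = rho); the edges are (par v, v) for v in V - {rho},
and len v > 0 is the length of the edge entering v.\<close>

definition anc :: "('v \<Rightarrow> 'v) \<Rightarrow> 'v \<Rightarrow> 'v set" where
  "anc par v = range (\<lambda>n. (par ^^ n) v)"

definition rooted_tree :: "'v set \<Rightarrow> ('v \<Rightarrow> 'v) \<Rightarrow> 'v \<Rightarrow> ('v \<Rightarrow> real) \<Rightarrow> bool" where
  "rooted_tree V par rho len \<longleftrightarrow>
     finite V \<and> rho \<in> V \<and> par rho = rho \<and> (\<forall>v\<in>V. par v \<in> V) \<and>
     (\<forall>v\<in>V. rho \<in> anc par v) \<and> (\<forall>v\<in>V - {rho}. len v > 0)"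

definition leaves :: "'v set \<Rightarrow> ('v \<Rightarrow> 'v) \<Rightarrow> 'v \<Rightarrow> 'v set" where
  "leaves V par rho = {v \<in> V. \<forall>w \<in> V - {rho}. par w \<noteq> v}"

definition shared_len :: "('v \<Rightarrow> 'v) \<Rightarrow> 'v \<Rightarrow> ('v \<Rightarrow> real) \<Rightarrow> 'v \<Rightarrow> 'v \<Rightarrow> real" where
  "shared_len par rho len x y = (\<Sum>w \<in> (anc par x \<inter> anc par y) - {rho}. len w)"

definition spread :: "'v set \<Rightarrow> ('v \<Rightarrow> 'v) \<Rightarrow> 'v \<Rightarrow> ('v \<Rightarrow> real) \<Rightarrow> real" where
  "spread V par rho len =
     (let L = leaves V par rho in
       (\<Sum>(x,y) \<in> {(x,y). x \<in> L \<and> y \<in> L \<and> x \<noteq> y}. min (shared_len par rho len x y) 1)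
       / (real (card L) * (real (card L) - 1)))"

definition transition_function :: "(real \<Rightarrow> 's \<Rightarrow> 's \<Rightarrow> real) \<Rightarrow> bool" where
  "transition_function P \<longleftrightarrow>
     (\<forall>t\<ge>0. \<forall>i j. P t i j \<ge> 0) \<and>
     (\<forall>t\<ge>0. \<forall>i. ((\<lambda>j. P t i j) has_sum 1) UNIV) \<and>
     (\<forall>i j. P 0 i j = (if i = j then 1 else 0)) \<and>
     (\<forall>s\<ge>0. \<forall>t\<ge>0. \<forall>i j. ((\<lambda>k. P s i k * P t k j) has_sum P (s + t) i j) UNIV) \<and>
     (\<forall>i j. ((\<lambda>t. P t i j) \<longlongrightarrow> (if i = j then 1 else 0)) (at_right 0))"

text \<open>Q is the (stable, conservative) Q-matrix of P: q_ij = p_ij'(0), finite,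
and sum over j ~= i of q_ij equals q_i = - q_ii.\<close>
definition has_stable_conservative_Q ::
    "(real \<Rightarrow> 's \<Rightarrow> 's \<Rightarrow> real) \<Rightarrow> ('s \<Rightarrow> 's \<Rightarrow> real) \<Rightarrow> bool" where
  "has_stable_conservative_Q P Q \<longleftrightarrow>
     (\<forall>i j. ((\<lambda>t. (P t i j - (if i = j then 1 else 0)) / t) \<longlongrightarrow> Q i j) (at_right 0)) \<and>
     (\<forall>i. ((\<lambda>j. Q i j) has_sum (- Q i i)) (UNIV - {i}))"

text \<open>X is a P_t-chain on the tree (restricted to its vertices) started from state i
at the root: the joint law of the vertex states is the product of transition
probabilities along the edges.\<close>
definition tree_chain ::
    "'w measure \<Rightarrow> 'v set \<Rightarrow> ('v \<Rightarrow> 'v) \<Rightarrow> 'v \<Rightarrow> ('v \<Rightarrow> real) \<Rightarrow>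
     (real \<Rightarrow> 's \<Rightarrow> 's \<Rightarrow> real) \<Rightarrow> 's \<Rightarrow> ('v \<Rightarrow> 'w \<Rightarrow> 's) \<Rightarrow> bool" where
  "tree_chain M V par rho len P i X \<longleftrightarrow>
     prob_space M \<and>
     (\<forall>v\<in>V. X v \<in> measurable M (count_space UNIV)) \<and>
     (\<forall>x :: 'v \<Rightarrow> 's.
        measure M {\<omega> \<in> space M. \<forall>v\<in>V. X v \<omega> = x v} =
        (if x rho = i then 1 else 0) * (\<Prod>v \<in> V - {rho}. P (len v) (x (par v)) (x v)))"

definition leaf_count :: "'v set \<Rightarrow> ('v \<Rightarrow> 'v) \<Rightarrow> 'v \<Rightarrow> ('v \<Rightarrow> 'w \<Rightarrow> 's) \<Rightarrow> 's \<Rightarrow> 'w \<Rightarrow> real" where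
  "leaf_count V par rho X j \<omega> = real (card {x \<in> leaves V par rho. X x \<omega> = j})"

end

theory Submission
  imports Defs
begin


lemma anc_self: "v \<in> anc par v"
  unfolding anc_def by (metis funpow_0 rangeI)

lemma anc_par: "w \<in> anc par v \<Longrightarrow> par w \<in> anc par v"
  unfolding anc_def by (auto simp del: funpow.simps simp: funpow_Suc_right[symmetric] image_iff)
     (metis comp_apply funpow.simps(2))

lemma funpow_in: "(\<forall>v\<in>V. par v \<in> V) \<Longrightarrow> u \<in> V \<Longrightarrow> (par ^^ n) u \<in> V"
  by (induction n) auto

lemma anc_sub: "(\<forall>v\<in>V. par v \<in> V) \<Longrightarrow> u \<in> V \<Longrightarrow> anc par u \<subseteq> V"
  unfolding anc_def by (auto intro: funpow_in)

lemma has_sum_nn: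
  fixes f :: "'a \<Rightarrow> real"
  assumes "(f has_sum s) A" "\<And>x. x \<in> A \<Longrightarrow> f x \<ge> 0"
  shows "(\<integral>\<^sup>+x. ennreal (f x) \<partial>count_space A) = ennreal s"
proof -
  have "f summable_on A" using assms(1) by (auto simp: summable_on_def)
  hence "(\<lambda>x. norm (f x)) summable_on A"
    by (rule summable_on_cong[THEN iffD1, rotated]) (use assms(2) in auto)
  hence ab: "Infinite_Set_Sum.abs_summable_on f A" using abs_summable_equivalent by blast
  have "(\<integral>\<^sup>+x. ennreal (f x) \<partial>count_space A) = ennreal (infsetsum f A)"
    using nn_integral_conv_infsetsum[OF ab assms(2)] by simp
  also have "infsetsum f A = infsum f A" using infsetsum_infsum[OF ab] .
  also have "\<dots> = s" using assms(1) by (rule infsumI)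
  finally show ?thesis .
qed



definition kk :: "('v\<Rightarrow>'v) \<Rightarrow> ('v\<Rightarrow>real) \<Rightarrow> (real\<Rightarrow>'s\<Rightarrow>'s\<Rightarrow>real) \<Rightarrow> ('v\<Rightarrow>'s) \<Rightarrow> 'v \<Rightarrow> real"
  where "kk par len P c v = P (len v) (c (par v)) (c v)"

definition wt :: "'v set \<Rightarrow> ('v\<Rightarrow>'v) \<Rightarrow> 'v \<Rightarrow> ('v\<Rightarrow>real) \<Rightarrow> (real\<Rightarrow>'s\<Rightarrow>'s\<Rightarrow>real) \<Rightarrow> 's \<Rightarrow> ('v\<Rightarrow>'s) \<Rightarrow> real"
  where "wt W par rho len P i c = (if c rho = i then 1 else 0) * (\<Prod>v\<in>W-{rho}. kk par len P c v)"

definition ev :: "'w measure \<Rightarrow> ('v \<Rightarrow> 'w \<Rightarrow> 's) \<Rightarrow> 'v set \<Rightarrow> ('v \<Rightarrow> 's) \<Rightarrow> 'w set"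
  where "ev M X W c = {\<omega>\<in>space M. \<forall>v\<in>W. X v \<omega> = c v}"

lemma ev_sets:
  assumes "\<forall>v\<in>W. X v \<in> measurable M (count_space UNIV)" "finite W"
  shows "ev M X W c \<in> sets M"
proof -
  have "ev M X W c = space M \<inter> (\<Inter>v\<in>W. X v -` {c v} \<inter> space M)"
    unfolding ev_def by auto
  also have "\<dots> \<in> sets M"
    using assms(2,1) 
  proof (induction W rule: finite_induct)
    case empty then show ?case by simp
  next
    case (insert x F)
    have "space M \<inter> (\<Inter>v\<in>insert x F. X v -` {c v} \<inter> space M)
        = (X x -` {c x} \<inter> space M) \<inter> (space M \<inter> (\<Inter>v\<in>F. X v -` {c v} \<inter> space M))" by auto
    moreover have "X x -` {c x} \<inter> space M \<in> sets M"
      using insert.prems by (auto intro: measurable_sets)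
    ultimately show ?case using insert by auto
  qed
  finally show ?thesis .
qed

lemma tf_nonneg: "transition_function P \<Longrightarrow> t \<ge> 0 \<Longrightarrow> P t a b \<ge> 0"
  unfolding transition_function_def by blast

lemma tf_sum: "transition_function P \<Longrightarrow> t \<ge> 0 \<Longrightarrow> (\<integral>\<^sup>+s. ennreal (P t a s) \<partial>count_space UNIV) = 1"
  using has_sum_nn[where f="\<lambda>s. P t a s" and s=1 and A=UNIV] unfolding transition_function_def by auto

lemma wt_nonneg:
  assumes "rooted_tree V par rho len" "transition_function P" "W \<subseteq> V"
  shows "wt W par rho len P i c \<ge> 0"
proof -
  have "\<forall>a\<in>W-{rho}. len a \<ge> 0" using assms unfolding rooted_tree_def by (auto intro: less_imp_le)
  thus ?thesis unfolding wt_def kk_def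
    by (intro mult_nonneg_nonneg prod_nonneg) (auto intro!: tf_nonneg[OF assms(2)])
qed

lemma marginal_aux:
  fixes P :: "real \<Rightarrow> 's::countable \<Rightarrow> 's \<Rightarrow> real"
  assumes tree: "rooted_tree V par rho len" and tf: "transition_function P"
    and tc: "tree_chain M V par rho len P i X"
  shows "\<forall>W c. W \<subseteq> V \<longrightarrow> rho \<in> W \<longrightarrow> (\<forall>v\<in>W. par v \<in> W) \<longrightarrow> card (V - W) = n \<longrightarrow>
     measure M (ev M X W c) = wt W par rho len P i c"
proof (induction n)
  case 0
  show ?case
  proof (intro allI impI)
    fix W c assume W: "W \<subseteq> V" "rho \<in> W" "\<forall>v\<in>W. par v \<in> W" "card (V - W) = 0"
    have "finite V" using tree unfolding rooted_tree_def by auto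
    hence "W = V" using W by auto
    thus "measure M (ev M X W c) = wt W par rho len P i c"
      using tc unfolding tree_chain_def ev_def wt_def kk_def by auto
  qed
next
  case (Suc n)
  show ?case
  proof (intro allI impI)
    fix W c assume W: "W \<subseteq> V" "rho \<in> W" "\<forall>v\<in>W. par v \<in> W" "card (V - W) = Suc n"
    have finV: "finite V" and parV: "\<forall>v\<in>V. par v \<in> V" and ancr: "\<forall>v\<in>V. rho \<in> anc par v"
      and lenp: "\<forall>v\<in>V-{rho}. len v > 0"
      using tree unfolding rooted_tree_def by auto
    have ps: "prob_space M" and meas: "\<forall>v\<in>V. X v \<in> measurable M (count_space UNIV)"
      using tc unfolding tree_chain_def by auto
    interpret prob_space M by (rule ps)
    obtain u where u: "u \<in> V" "u \<notin> W" using W(4) by (metis card.empty Diff_eq_empty_iff subsetI nat.distinct(1))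
    obtain m where m: "(par ^^ m) u = rho" using ancr u unfolding anc_def by auto
    define n0 where "n0 = (LEAST k. (par ^^ k) u \<in> W)"
    have n0W: "(par ^^ n0) u \<in> W" unfolding n0_def by (rule LeastI[of _ m]) (use m W in auto)
    have "n0 \<noteq> 0" by (metis funpow_0 n0W u(2))
    then obtain k where k: "n0 = Suc k" by (cases n0) auto
    define v where "v = (par ^^ k) u"
    have vW: "v \<notin> W" unfolding v_def using not_less_Least[of k "\<lambda>k. (par ^^ k) u \<in> W"] k n0_def by auto
    have pv: "par v \<in> W" using n0W k unfolding v_def by simp
    have vV: "v \<in> V" unfolding v_def using funpow_in[OF parV u(1)] .
    have vr: "v \<noteq> rho" using vW W by auto
    define W' where "W' = insert v W"
    have W': "W' \<subseteq> V" "rho \<in> W'" "\<forall>w\<in>W'. par w \<in> W'" "card (V - W') = n"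
      using W vV pv vW unfolding W'_def
      by (auto simp: finV card_Diff_subset)
    have IH: "\<And>d. measure M (ev M X W' d) = wt W' par rho len P i d" using Suc.IH W' by blast
    have finW: "finite W" using W(1) finV finite_subset by auto
    have evs: "\<And>d. ev M X W' d \<in> sets M" using W' meas finV by (intro ev_sets) (auto intro: finite_subset)
    have evW: "ev M X W c = (\<Union>s\<in>UNIV. ev M X W' (c(v:=s)))"
      unfolding ev_def W'_def using vW by auto
    have disj: "disjoint_family_on (\<lambda>s. ev M X W' (c(v:=s))) UNIV"
      unfolding disjoint_family_on_def ev_def W'_def by auto
    have wt': "wt W' par rho len P i (c(v:=s)) = wt W par rho len P i c * P (len v) (c (par v)) s" for s
    proof -
      have "W' - {rho} = insert v (W - {rho})" unfolding W'_def using vr by auto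
      moreover have "(\<Prod>w\<in>W-{rho}. kk par len P (c(v:=s)) w) = (\<Prod>w\<in>W-{rho}. kk par len P c w)"
        using W(3) vW unfolding kk_def by (intro prod.cong) auto
      ultimately show ?thesis
        unfolding wt_def using vr vW finW pv by (auto simp: kk_def)
    qed
    have lv: "len v > 0" using lenp vV vr by auto
    have wn: "wt W par rho len P i c \<ge> 0" using wt_nonneg[OF tree tf W(1)] .
    have "emeasure M (ev M X W c) = (\<integral>\<^sup>+s. emeasure M (ev M X W' (c(v:=s))) \<partial>count_space UNIV)"
      unfolding evW by (rule emeasure_UN_countable) (use evs disj in \<open>auto intro: countableI_type\<close>)
    also have "\<dots> = (\<integral>\<^sup>+s. ennreal (wt W par rho len P i c) * ennreal (P (len v) (c (par v)) s) \<partial>count_space UNIV)"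
      using IH wt' wn tf_nonneg[OF tf, of "len v"] lv
      by (intro nn_integral_cong) (auto simp: emeasure_eq_measure ennreal_mult less_imp_le)
    also have "\<dots> = ennreal (wt W par rho len P i c)"
      using tf_sum[OF tf, of "len v"] lv by (subst nn_integral_cmult) auto
    finally show "measure M (ev M X W c) = wt W par rho len P i c"
      using wn by (simp add: emeasure_eq_measure)
  qed
qed

lemma marginal:
  fixes P :: "real \<Rightarrow> 's::countable \<Rightarrow> 's \<Rightarrow> real"
  assumes "rooted_tree V par rho len" "transition_function P"
    "tree_chain M V par rho len P i X" "W \<subseteq> V" "rho \<in> W" "\<forall>v\<in>W. par v \<in> W"
  shows "measure M (ev M X W c) = wt W par rho len P i c"
  using marginal_aux[OF assms(1-3)] assms(4-6) by blast




lemma nn_prod_count: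
  assumes "countable D1" "countable D2"
  shows "(\<integral>\<^sup>+p. a (fst p) * b (snd p) \<partial>count_space (D1 \<times> D2))
       = (\<integral>\<^sup>+x. a x \<partial>count_space D1) * (\<integral>\<^sup>+y. b y \<partial>count_space D2)"
proof -
  interpret s2: sigma_finite_measure "count_space D2"
    using assms(2) by (rule sigma_finite_measure_count_space_countable)
  have "(\<integral>\<^sup>+p. a (fst p) * b (snd p) \<partial>count_space (D1 \<times> D2))
      = (\<integral>\<^sup>+p. a (fst p) * b (snd p) \<partial>(count_space D1 \<Otimes>\<^sub>M count_space D2))"
    using pair_measure_countable[OF assms] by simp
  also have "\<dots> = (\<integral>\<^sup>+x. \<integral>\<^sup>+y. a x * b y \<partial>count_space D2 \<partial>count_space D1)"
    by (subst s2.nn_integral_fst[symmetric]) (auto simp: pair_measure_countable[OF assms])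
  also have "\<dots> = (\<integral>\<^sup>+x. a x * (\<integral>\<^sup>+y. b y \<partial>count_space D2) \<partial>count_space D1)"
    by (subst nn_integral_cmult) auto
  also have "\<dots> = (\<integral>\<^sup>+x. a x \<partial>count_space D1) * (\<integral>\<^sup>+y. b y \<partial>count_space D2)"
    by (subst nn_integral_multc) auto
  finally show ?thesis .
qed

lemma ev_union:
  fixes X :: "'v \<Rightarrow> 'w \<Rightarrow> 's::countable"
  assumes "finite S" "\<forall>v\<in>S. X v \<in> measurable M (count_space UNIV)"
  shows "emeasure M {\<omega>\<in>space M. R (restrict (\<lambda>v. X v \<omega>) S)}
       = (\<integral>\<^sup>+d. emeasure M (ev M X S d) \<partial>count_space {d\<in>PiE S (\<lambda>_. UNIV). R d})"
proof -
  let ?D = "{d\<in>PiE S (\<lambda>_. UNIV). R d}"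
  have eq: "{\<omega>\<in>space M. R (restrict (\<lambda>v. X v \<omega>) S)} = (\<Union>d\<in>?D. ev M X S d)"
  proof (intro equalityI subsetI)
    fix \<omega> assume "\<omega> \<in> {\<omega>\<in>space M. R (restrict (\<lambda>v. X v \<omega>) S)}"
    thus "\<omega> \<in> (\<Union>d\<in>?D. ev M X S d)"
      by (intro UN_I[of "restrict (\<lambda>v. X v \<omega>) S"]) (auto simp: ev_def)
  next
    fix \<omega> assume "\<omega> \<in> (\<Union>d\<in>?D. ev M X S d)"
    then obtain d where d: "d \<in> ?D" "\<omega> \<in> ev M X S d" by auto
    have "restrict (\<lambda>v. X v \<omega>) S = d"
      using d unfolding ev_def by (auto simp: PiE_def extensional_def restrict_def)
    thus "\<omega> \<in> {\<omega>\<in>space M. R (restrict (\<lambda>v. X v \<omega>) S)}" using d unfolding ev_def by auto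
  qed
  have cD: "countable ?D"
    by (rule countable_subset[OF _ countable_PiE[OF assms(1)]]) (auto intro: countableI_type)
  have disj: "disjoint_family_on (ev M X S) ?D"
    unfolding disjoint_family_on_def
  proof (intro ballI impI)
    fix m n assume mn: "m \<in> ?D" "n \<in> ?D" "m \<noteq> n"
    then obtain v where "v \<in> S" "m v \<noteq> n v" by (auto simp: PiE_def extensional_def) (metis ext)
    thus "ev M X S m \<inter> ev M X S n = {}" unfolding ev_def by auto
  qed
  show ?thesis unfolding eq
    by (rule emeasure_UN_countable) (use assms cD disj in \<open>auto intro: ev_sets\<close>)
qed




lemma wt_cong:
  assumes "\<forall>v\<in>W. c v = d v" "rho \<in> W" "\<forall>v\<in>W. par v \<in> W"
  shows "wt W par rho len P i c = wt W par rho len P i d"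
  unfolding wt_def kk_def using assms by (auto intro!: prod.cong)

lemma ev_cong:
  assumes "\<forall>v\<in>W. c v = d v"
  shows "ev M X W c = ev M X W d"
  unfolding ev_def using assms by auto

lemma wt_split:
  assumes "finite U" "finite U'"
  shows "wt (U \<union> U') par rho len P i c * wt (U \<inter> U') par rho len P i c
       = wt U par rho len P i c * wt U' par rho len P i c"
proof -
  have a: "(U \<union> U') - {rho} = (U - {rho}) \<union> (U' - {rho})" "(U \<inter> U') - {rho} = (U - {rho}) \<inter> (U' - {rho})"
    by auto
  have "(\<Prod>v\<in>(U-{rho}) \<union> (U'-{rho}). kk par len P c v) * (\<Prod>v\<in>(U-{rho}) \<inter> (U'-{rho}). kk par len P c v)
     = (\<Prod>v\<in>U-{rho}. kk par len P c v) * (\<Prod>v\<in>U'-{rho}. kk par len P c v)"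
    by (rule prod.union_inter) (use assms in auto)
  thus ?thesis unfolding wt_def a by auto
qed

lemma cov_bound:
  fixes P :: "real \<Rightarrow> 's::countable \<Rightarrow> 's \<Rightarrow> real"
  assumes tree: "rooted_tree V par rho len" and tf: "transition_function P"
    and tc: "tree_chain M V par rho len P i X" and xV: "x \<in> V" and yV: "y \<in> V"
  shows "measure M ({\<omega>\<in>space M. X x \<omega> = j} \<inter> {\<omega>\<in>space M. X y \<omega> = j})
         - measure M {\<omega>\<in>space M. X x \<omega> = j} * measure M {\<omega>\<in>space M. X y \<omega> = j}
         \<le> 2 * (1 - (\<Prod>v\<in>(anc par x \<inter> anc par y) - {rho}. P (len v) i i))"
proof -
  have finV: "finite V" and parV: "\<forall>v\<in>V. par v \<in> V" and ancr: "\<forall>v\<in>V. rho \<in> anc par v"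
    using tree unfolding rooted_tree_def by auto
  have ps: "prob_space M" and meas: "\<forall>v\<in>V. X v \<in> measurable M (count_space UNIV)"
    using tc unfolding tree_chain_def by auto
  interpret prob_space M by (rule ps)
  define U where "U = anc par x"
  define U' where "U' = anc par y"
  define A where "A = U \<inter> U'"
  define W where "W = U \<union> U'"
  have UV: "U \<subseteq> V" "U' \<subseteq> V" unfolding U_def U'_def using anc_sub[OF parV xV] anc_sub[OF parV yV] by auto
  hence AV: "A \<subseteq> V" and WV: "W \<subseteq> V" unfolding A_def W_def by auto
  have fin: "finite U" "finite U'" "finite A" "finite W" using UV AV WV finV by (meson finite_subset)+
  have rU: "rho \<in> U" "rho \<in> U'" "rho \<in> A" "rho \<in> W" unfolding U_def U'_def A_def W_def using ancr xV yV by blast+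
  have pU1: "\<forall>v\<in>U. par v \<in> U" "\<forall>v\<in>U'. par v \<in> U'" unfolding U_def U'_def by (simp_all add: anc_par)
  have pU: "\<forall>v\<in>U. par v \<in> U" "\<forall>v\<in>U'. par v \<in> U'" "\<forall>v\<in>A. par v \<in> A" "\<forall>v\<in>W. par v \<in> W"
    unfolding A_def W_def using pU1 by auto
  have xU: "x \<in> U" and yU: "y \<in> U'" unfolding U_def U'_def by (rule anc_self)+
  have mg: "\<And>S c. S \<subseteq> V \<Longrightarrow> rho \<in> S \<Longrightarrow> \<forall>v\<in>S. par v \<in> S \<Longrightarrow> measure M (ev M X S c) = wt S par rho len P i c"
    using marginal[OF tree tf tc] by blast
  define e where "e = measure M (ev M X A (\<lambda>_. i))"
  have e_eq: "e = (\<Prod>v\<in>A - {rho}. P (len v) i i)"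
    unfolding e_def using mg[OF AV rU(3) pU(3)] by (simp add: wt_def kk_def)
  define Fx where "Fx = {\<omega>\<in>space M. X x \<omega> = j}"
  define Fy where "Fy = {\<omega>\<in>space M. X y \<omega> = j}"
  define EA where "EA = ev M X A (\<lambda>_. i)"
  have measS: "\<And>S. S \<subseteq> V \<Longrightarrow> \<forall>v\<in>S. X v \<in> measurable M (count_space UNIV)" using meas by auto
  have FxS: "Fx \<in> sets M" "Fy \<in> sets M"
  proof -
    have "Fx = X x -` {j} \<inter> space M" "Fy = X y -` {j} \<inter> space M" unfolding Fx_def Fy_def by auto
    thus "Fx \<in> sets M" "Fy \<in> sets M" using meas xV yV by (auto intro: measurable_sets)
  qed
  have EAS: "EA \<in> sets M" unfolding EA_def using measS[OF AV] fin(3) by (rule ev_sets)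
  define Rz where "Rz = (\<lambda>c. (\<forall>v\<in>A. c v = i) \<and> c x = j \<and> c y = j)"
  define Rx where "Rx = (\<lambda>c. (\<forall>v\<in>A. c v = i) \<and> c x = j)"
  define Ry where "Ry = (\<lambda>c. (\<forall>v\<in>A. c v = i) \<and> c y = j)"
  have Zeq: "EA \<inter> Fx \<inter> Fy = {\<omega>\<in>space M. Rz (restrict (\<lambda>v. X v \<omega>) W)}"
    unfolding EA_def Fx_def Fy_def Rz_def ev_def using xU yU unfolding A_def W_def by auto
  have Xeq: "EA \<inter> Fx = {\<omega>\<in>space M. Rx (restrict (\<lambda>v. X v \<omega>) U)}"
    unfolding EA_def Fx_def Rx_def ev_def using xU unfolding A_def by auto
  have Yeq: "EA \<inter> Fy = {\<omega>\<in>space M. Ry (restrict (\<lambda>v. X v \<omega>) U')}"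
    unfolding EA_def Fy_def Ry_def ev_def using yU unfolding A_def by auto
  define Cz where "Cz = {c\<in>PiE W (\<lambda>_. UNIV). Rz c}"
  define Dx where "Dx = {c\<in>PiE U (\<lambda>_. UNIV). Rx c}"
  define Dy where "Dy = {c\<in>PiE U' (\<lambda>_. UNIV). Ry c}"
  have Zm: "emeasure M (EA \<inter> Fx \<inter> Fy) = (\<integral>\<^sup>+c. emeasure M (ev M X W c) \<partial>count_space Cz)"
    unfolding Zeq Cz_def by (rule ev_union) (use fin measS[OF WV] in auto)
  have Xm: "emeasure M (EA \<inter> Fx) = (\<integral>\<^sup>+c. emeasure M (ev M X U c) \<partial>count_space Dx)"
    unfolding Xeq Dx_def by (rule ev_union) (use fin measS[OF UV(1)] in auto)
  have Ym: "emeasure M (EA \<inter> Fy) = (\<integral>\<^sup>+c. emeasure M (ev M X U' c) \<partial>count_space Dy)"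
    unfolding Yeq Dy_def by (rule ev_union) (use fin measS[OF UV(2)] in auto)
  have cntD: "countable Dx" "countable Dy"
    unfolding Dx_def Dy_def
    by (rule countable_subset[OF _ countable_PiE[OF fin(1)]], auto intro: countableI_type)
       (rule countable_subset[OF _ countable_PiE[OF fin(2)]], auto intro: countableI_type)
  define g where "g = (\<lambda>p::(_ \<Rightarrow> 's) \<times> _. (\<lambda>v. if v \<in> U then fst p v else snd p v))"
  have bij: "bij_betw g (Dx \<times> Dy) Cz"
  proof (rule bij_betw_byWitness[where f'="\<lambda>c. (restrict c U, restrict c U')"])
    show "\<forall>p\<in>Dx \<times> Dy. (restrict (g p) U, restrict (g p) U') = p"
      unfolding g_def Dx_def Dy_def Rx_def Ry_def A_def
      by (auto simp: PiE_def extensional_def restrict_def fun_eq_iff)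
    show "\<forall>c\<in>Cz. g (restrict c U, restrict c U') = c"
      unfolding g_def Cz_def W_def
      by (auto simp: PiE_def extensional_def restrict_def fun_eq_iff)
    show "g ` (Dx \<times> Dy) \<subseteq> Cz"
      unfolding g_def Dx_def Dy_def Rx_def Ry_def Cz_def Rz_def A_def W_def
      using xU yU by (auto simp: PiE_def extensional_def)
    show "(\<lambda>c. (restrict c U, restrict c U')) ` Cz \<subseteq> Dx \<times> Dy"
      unfolding Dx_def Dy_def Rx_def Ry_def Cz_def Rz_def A_def W_def
      using xU yU by auto
  qed
  have pt: "emeasure M (ev M X W c) * ennreal e = emeasure M (ev M X U c) * emeasure M (ev M X U' c)"
    if c: "c \<in> Cz" for c
  proof -
    have "wt A par rho len P i c = wt A par rho len P i (\<lambda>_. i)"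
      using c unfolding Cz_def Rz_def by (intro wt_cong) (use rU pU in auto)
    hence eA: "e = wt A par rho len P i c" unfolding e_def using mg[OF AV rU(3) pU(3)] by simp
    have "emeasure M (ev M X W c) * ennreal e = ennreal (wt W par rho len P i c * wt A par rho len P i c)"
      using eA mg[OF WV rU(4) pU(4)] wt_nonneg[OF tree tf WV] wt_nonneg[OF tree tf AV]
      by (simp add: emeasure_eq_measure ennreal_mult)
    also have "wt W par rho len P i c * wt A par rho len P i c = wt U par rho len P i c * wt U' par rho len P i c"
      unfolding W_def A_def by (rule wt_split) (use fin in auto)
    also have "ennreal \<dots> = emeasure M (ev M X U c) * emeasure M (ev M X U' c)"
      using mg[OF UV(1) rU(1) pU(1)] mg[OF UV(2) rU(2) pU(2)] wt_nonneg[OF tree tf UV(1)] wt_nonneg[OF tree tf UV(2)]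
      by (simp add: emeasure_eq_measure ennreal_mult)
    finally show ?thesis .
  qed
  have "emeasure M (EA \<inter> Fx \<inter> Fy) * ennreal e = (\<integral>\<^sup>+c. emeasure M (ev M X W c) * ennreal e \<partial>count_space Cz)"
    unfolding Zm by (rule nn_integral_multc[symmetric]) auto
  also have "\<dots> = (\<integral>\<^sup>+c. emeasure M (ev M X U c) * emeasure M (ev M X U' c) \<partial>count_space Cz)"
    by (rule nn_integral_cong) (use pt in auto)
  also have "\<dots> = (\<integral>\<^sup>+p. emeasure M (ev M X U (g p)) * emeasure M (ev M X U' (g p)) \<partial>count_space (Dx \<times> Dy))"
    by (rule nn_integral_bij_count_space[OF bij, symmetric])
  also have "\<dots> = (\<integral>\<^sup>+p. emeasure M (ev M X U (fst p)) * emeasure M (ev M X U' (snd p)) \<partial>count_space (Dx \<times> Dy))"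
  proof (rule nn_integral_cong)
    fix p assume "p \<in> space (count_space (Dx \<times> Dy))"
    hence p: "fst p \<in> Dx" "snd p \<in> Dy" by auto
    have "ev M X U (g p) = ev M X U (fst p)" by (rule ev_cong) (auto simp: g_def)
    moreover have "ev M X U' (g p) = ev M X U' (snd p)"
      by (rule ev_cong) (use p in \<open>auto simp: g_def Dx_def Dy_def Rx_def Ry_def A_def\<close>)
    ultimately show "emeasure M (ev M X U (g p)) * emeasure M (ev M X U' (g p)) =
         emeasure M (ev M X U (fst p)) * emeasure M (ev M X U' (snd p))" by simp
  qed
  also have "\<dots> = emeasure M (EA \<inter> Fx) * emeasure M (EA \<inter> Fy)"
    unfolding Xm Ym by (rule nn_prod_count[OF cntD])
  finally have key: "emeasure M (EA \<inter> Fx \<inter> Fy) * ennreal e = emeasure M (EA \<inter> Fx) * emeasure M (EA \<inter> Fy)" .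
  define z where "z = measure M (EA \<inter> Fx \<inter> Fy)"
  define u where "u = measure M (EA \<inter> Fx)"
  define w where "w = measure M (EA \<inter> Fy)"
  have e0: "e \<ge> 0" "e \<le> 1" unfolding e_def by auto
  have zew: "z * e = u * w"
  proof -
    have "ennreal (z * e) = ennreal (u * w)"
      using key e0 unfolding z_def u_def w_def by (simp add: emeasure_eq_measure ennreal_mult'')
    thus ?thesis unfolding z_def u_def w_def using e0 by (subst (asm) ennreal_inj) auto
  qed
  have z01: "z \<ge> 0" "z \<le> 1" "u \<ge> 0" "w \<ge> 0" unfolding z_def u_def w_def by auto
  have uF: "u \<le> measure M Fx" "w \<le> measure M Fy" unfolding u_def w_def
    using FxS EAS by (auto intro!: finite_measure_mono)
  have "measure M (Fx \<inter> Fy) \<le> measure M ((EA \<inter> Fx \<inter> Fy) \<union> (space M - EA))"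
    using FxS EAS by (intro finite_measure_mono) (auto dest: sets.sets_into_space)
  also have "\<dots> \<le> z + measure M (space M - EA)"
    unfolding z_def using FxS EAS by (intro measure_Un_le) auto
  also have "measure M (space M - EA) = 1 - e" unfolding e_def EA_def[symmetric] using EAS by (rule prob_compl)
  finally have pxy: "measure M (Fx \<inter> Fy) \<le> z + (1 - e)" .
  have "u * w \<le> measure M Fx * measure M Fy" using uF z01 by (intro mult_mono) auto
  hence "measure M (Fx \<inter> Fy) - measure M Fx * measure M Fy \<le> z + (1 - e) - z * e"
    using pxy zew by linarith
  also have "\<dots> \<le> 2 * (1 - e)"
  proof -
    have "z * (1 - e) \<le> 1 * (1 - e)" using z01 e0 by (intro mult_right_mono) auto
    thus ?thesis by (simp add: algebra_simps)
  qed
  finally show ?thesis unfolding Fx_def Fy_def e_eq A_def U_def U'_def .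
qed




lemma has_sum_single_le:
  fixes f :: "'a \<Rightarrow> real"
  assumes "(f has_sum s) UNIV" "\<And>x. f x \<ge> 0"
  shows "f a \<le> s"
proof -
  have "(f has_sum f a) {a}" using has_sum_finite[of "{a}" f] by simp
  thus ?thesis by (rule has_sum_mono_neutral[OF _ assms(1)]) (use assms(2) in auto)
qed

lemma tf_le1: "transition_function P \<Longrightarrow> t \<ge> 0 \<Longrightarrow> P t a b \<le> 1"
  unfolding transition_function_def
  by (intro has_sum_single_le[where f="\<lambda>b. P t a b"]) auto

lemma tf_mult: 
  assumes "transition_function P" "s \<ge> 0" "t \<ge> 0"
  shows "P s i i * P t i i \<le> P (s + t) i i"
proof -
  have "((\<lambda>k. P s i k * P t k i) has_sum P (s + t) i i) UNIV" 
    using assms unfolding transition_function_def by blast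
  thus ?thesis
    by (rule has_sum_single_le[where f="\<lambda>k. P s i k * P t k i"])
       (use assms in \<open>auto intro!: mult_nonneg_nonneg tf_nonneg[OF assms(1)]\<close>)
qed

lemma tf_subadd:
  assumes "transition_function P" "s \<ge> 0" "t \<ge> 0"
  shows "1 - P (s + t) i i \<le> (1 - P s i i) + (1 - P t i i)"
proof -
  have a: "P s i i \<le> 1" "P t i i \<le> 1" using tf_le1[OF assms(1)] assms(2,3) by auto
  have "0 \<le> (1 - P s i i) * (1 - P t i i)" using a by auto
  thus ?thesis using tf_mult[OF assms, of i] by (simp add: algebra_simps)
qed

lemma tf_subadd_n:
  assumes "transition_function P" "h \<ge> 0"
  shows "1 - P (real n * h) i i \<le> real n * (1 - P h i i)"
proof (induction n)
  case 0
  then show ?case using assms unfolding transition_function_def by simp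
next
  case (Suc n)
  have "1 - P (real (Suc n) * h) i i = 1 - P (real n * h + h) i i" by (simp add: algebra_simps)
  also have "\<dots> \<le> (1 - P (real n * h) i i) + (1 - P h i i)"
    using assms by (intro tf_subadd) auto
  also have "\<dots> \<le> real (Suc n) * (1 - P h i i)" using Suc by (simp add: algebra_simps)
  finally show ?case .
qed

lemma tf_linear:
  assumes tf: "transition_function P" and hq: "has_stable_conservative_Q P Q" and t: "t > 0"
  shows "1 - P t i i \<le> (- Q i i) * t"
proof -
  have lim: "((\<lambda>h. (P h i i - 1) / h) \<longlongrightarrow> Q i i) (at_right 0)"
  proof -
    have "\<forall>i j. ((\<lambda>t. (P t i j - (if i = j then 1 else 0)) / t) \<longlongrightarrow> Q i j) (at_right 0)"
      using hq unfolding has_stable_conservative_Q_def by blast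
    hence "((\<lambda>t. (P t i i - (if i = i then 1 else 0)) / t) \<longlongrightarrow> Q i i) (at_right 0)" by blast
    thus ?thesis by simp
  qed
  have fl: "filterlim (\<lambda>n. t / real n) (at_right 0) sequentially"
  proof (rule tendsto_imp_filterlim_at_right)
    show "((\<lambda>n. t / real n) \<longlongrightarrow> 0) sequentially" by (rule lim_const_over_n)
    show "\<forall>\<^sub>F n in sequentially. t / real n > 0"
      using t by (auto simp: eventually_sequentially intro!: exI[of _ 1])
  qed
  have L: "(\<lambda>n. - t * ((P (t / real n) i i - 1) / (t / real n))) \<longlonglongrightarrow> - t * Q i i"
    by (intro tendsto_mult tendsto_const filterlim_compose[OF lim fl])
  have "1 - P t i i \<le> - t * Q i i"
  proof (rule LIMSEQ_le_const[OF L])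
    show "\<exists>N. \<forall>n\<ge>N. 1 - P t i i \<le> - t * ((P (t / real n) i i - 1) / (t / real n))"
    proof (intro exI allI impI)
      fix n :: nat assume n: "n \<ge> 1"
      have "1 - P (real n * (t / real n)) i i \<le> real n * (1 - P (t / real n) i i)"
        using t by (intro tf_subadd_n[OF tf]) auto
      moreover have "real n * (t / real n) = t" using n by auto
      moreover have "- t * ((P (t / real n) i i - 1) / (t / real n)) = real n * (1 - P (t / real n) i i)"
        using n t by (simp add: field_simps)
      ultimately show "1 - P t i i \<le> - t * ((P (t / real n) i i - 1) / (t / real n))" by simp
    qed
  qed
  thus ?thesis by (simp add: algebra_simps)
qed

lemma one_minus_prod:
  fixes a :: "'a \<Rightarrow> real"
  assumes "finite S" "\<And>v. v \<in> S \<Longrightarrow> 0 \<le> a v \<and> a v \<le> 1"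
  shows "1 - (\<Prod>v\<in>S. a v) \<le> (\<Sum>v\<in>S. 1 - a v)"
  using assms
proof (induction S rule: finite_induct)
  case empty then show ?case by simp
next
  case (insert x F)
  have p: "0 \<le> (\<Prod>v\<in>F. a v)" "(\<Prod>v\<in>F. a v) \<le> 1"
    using insert by (auto intro!: prod_nonneg prod_le_1)
  have ax: "0 \<le> a x" "a x \<le> 1" using insert by auto
  have "0 \<le> (1 - a x) * (1 - (\<Prod>v\<in>F. a v))" using p ax by auto
  hence "1 - a x * (\<Prod>v\<in>F. a v) \<le> (1 - a x) + (1 - (\<Prod>v\<in>F. a v))" by (simp add: algebra_simps)
  also have "\<dots> \<le> (1 - a x) + (\<Sum>v\<in>F. 1 - a v)" using insert by auto
  finally show ?case using insert by simp
qed




lemma var_expand: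
  fixes M :: "'w measure" and L :: "'v set" and F :: "'v \<Rightarrow> 'w set" and N :: "'w \<Rightarrow> real"
  assumes ps: "prob_space M" and fin: "finite L" and FS: "\<And>x. x \<in> L \<Longrightarrow> F x \<in> sets M"
    and N: "\<And>\<omega>. \<omega> \<in> space M \<Longrightarrow> N \<omega> = (\<Sum>x\<in>L. indicator (F x) \<omega>)"
  shows "prob_space.variance M N = (\<Sum>x\<in>L. \<Sum>y\<in>L. measure M (F x \<inter> F y) - measure M (F x) * measure M (F y))"
proof -
  interpret prob_space M by (rule ps)
  define p where "p x = measure M (F x)" for x
  have FS': "F x \<subseteq> space M" if "x \<in> L" for x using FS[OF that] sets.sets_into_space by auto
  have int: "integrable M (indicator A :: 'w \<Rightarrow> real)" if "A \<in> sets M" for A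
    using that by (intro integrable_real_indicator) (auto simp: less_top[symmetric])
  have mu: "expectation N = (\<Sum>x\<in>L. p x)"
  proof -
    have "expectation N = expectation (\<lambda>\<omega>. \<Sum>x\<in>L. indicator (F x) \<omega>)"
      using N by (intro Bochner_Integration.integral_cong) auto
    also have "\<dots> = (\<Sum>x\<in>L. expectation (indicator (F x)))"
      using FS int by (intro Bochner_Integration.integral_sum[where f="\<lambda>x. indicator (F x)"]) auto
    also have "\<dots> = (\<Sum>x\<in>L. p x)" using FS' by (intro sum.cong) (auto simp: p_def Int_absorb2)
    finally show ?thesis .
  qed
  define G where "G x y \<omega> = indicator (F x \<inter> F y) \<omega> - p x * indicator (F y) \<omega> - p y * indicator (F x) \<omega> + p x * p y"
    for x y \<omega>
  have intG: "integrable M (G x y)" if "x \<in> L" "y \<in> L" for x y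
    unfolding G_def using int[OF FS[OF that(2)]] int[OF FS[OF that(1)]] FS that
    by (intro Bochner_Integration.integrable_add Bochner_Integration.integrable_diff
      integrable_mult_right int) auto
  have EG: "expectation (G x y) = measure M (F x \<inter> F y) - p x * p y" if "x \<in> L" "y \<in> L" for x y
  proof -
    have i1: "integrable M (indicator (F x \<inter> F y) :: 'w \<Rightarrow> real)" using FS that by (intro int) auto
    have i2: "integrable M (\<lambda>\<omega>. p x * indicator (F y) \<omega>)" using int[OF FS[OF that(2)]] by auto
    have i3: "integrable M (\<lambda>\<omega>. p y * indicator (F x) \<omega>)" using int[OF FS[OF that(1)]] by auto
    have "expectation (G x y) = expectation (\<lambda>\<omega>. indicator (F x \<inter> F y) \<omega> - p x * indicator (F y) \<omega> - p y * indicator (F x) \<omega>) + expectation (\<lambda>\<omega>. p x * p y)"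
      unfolding G_def by (rule Bochner_Integration.integral_add) (use i1 i2 i3 in auto)
    also have "expectation (\<lambda>\<omega>. indicator (F x \<inter> F y) \<omega> - p x * indicator (F y) \<omega> - p y * indicator (F x) \<omega>)
       = expectation (\<lambda>\<omega>. indicator (F x \<inter> F y) \<omega> - p x * indicator (F y) \<omega>) - expectation (\<lambda>\<omega>. p y * indicator (F x) \<omega>)"
      by (rule Bochner_Integration.integral_diff) (use i1 i2 i3 in auto)
    also have "expectation (\<lambda>\<omega>. indicator (F x \<inter> F y) \<omega> - p x * indicator (F y) \<omega>)
       = expectation (indicator (F x \<inter> F y)) - expectation (\<lambda>\<omega>. p x * indicator (F y) \<omega>)"
      by (rule Bochner_Integration.integral_diff) (use i1 i2 i3 in auto)
    also have "expectation (\<lambda>\<omega>. p x * indicator (F y) \<omega>) = p x * expectation (indicator (F y))"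
      by (rule integral_mult_right_zero)
    also have "expectation (\<lambda>\<omega>. p y * indicator (F x) \<omega>) = p y * expectation (indicator (F x))"
      by (rule integral_mult_right_zero)
    also have "expectation (\<lambda>\<omega>. p x * p y) = p x * p y" using prob_space by simp
    finally have "expectation (G x y) = expectation (indicator (F x \<inter> F y)) - p x * expectation (indicator (F y))
        - p y * expectation (indicator (F x)) + p x * p y" .
    thus ?thesis using FS' that by (simp add: p_def Int_absorb2 inf.absorb1 le_infI1)
  qed
  have "prob_space.variance M N = expectation (\<lambda>\<omega>. \<Sum>x\<in>L. \<Sum>y\<in>L. G x y \<omega>)"
  proof (intro Bochner_Integration.integral_cong refl)
    fix \<omega> assume w: "\<omega> \<in> space M"
    have "N \<omega> - expectation N = (\<Sum>x\<in>L. indicator (F x) \<omega> - p x)"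
      using N[OF w] mu by (simp add: sum_subtractf)
    hence "(N \<omega> - expectation N)\<^sup>2 = (\<Sum>x\<in>L. \<Sum>y\<in>L. (indicator (F x) \<omega> - p x) * (indicator (F y) \<omega> - p y))"
      by (simp add: power2_eq_square sum_product)
    also have "\<dots> = (\<Sum>x\<in>L. \<Sum>y\<in>L. G x y \<omega>)"
      unfolding G_def by (intro sum.cong refl) (simp add: indicator_inter_arith algebra_simps)
    finally show "(N \<omega> - expectation N)\<^sup>2 = (\<Sum>x\<in>L. \<Sum>y\<in>L. G x y \<omega>)" .
  qed
  also have "\<dots> = (\<Sum>x\<in>L. \<Sum>y\<in>L. expectation (G x y))"
    using intG by (simp add: Bochner_Integration.integral_sum)
  also have "\<dots> = (\<Sum>x\<in>L. \<Sum>y\<in>L. measure M (F x \<inter> F y) - measure M (F x) * measure M (F y))"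
    using EG by (simp add: p_def)
  finally show ?thesis .
qed




theorem mainTheorem8:
  fixes V :: "'v set" and par :: "'v \<Rightarrow> 'v" and rho :: 'v and len :: "'v \<Rightarrow> real"
    and P :: "real \<Rightarrow> 's::countable \<Rightarrow> 's \<Rightarrow> real" and Q :: "'s \<Rightarrow> 's \<Rightarrow> real"
    and M :: "'w measure" and X :: "'v \<Rightarrow> 'w \<Rightarrow> 's" and i j :: 's
  assumes "rooted_tree V par rho len"
    and "card (leaves V par rho) \<ge> 2"
    and "transition_function P"
    and "has_stable_conservative_Q P Q"
    and "tree_chain M V par rho len P i X"
  shows "prob_space.variance M (leaf_count V par rho X j)
           \<le> real (card (leaves V par rho)) / 4
             + 2 * max (- Q i i) 1 * spread V par rho len * real (card (leaves V par rho)) ^ 2"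
proof -
  note tree = assms(1) and tf = assms(3) and hq = assms(4) and tc = assms(5)
  have finV: "finite V" and parV: "\<forall>v\<in>V. par v \<in> V" and lenp: "\<forall>v\<in>V-{rho}. len v > 0"
    using tree unfolding rooted_tree_def by auto
  have ps: "prob_space M" and meas: "\<forall>v\<in>V. X v \<in> measurable M (count_space UNIV)"
    using tc unfolding tree_chain_def by auto
  interpret prob_space M by (rule ps)
  define L where "L = leaves V par rho"
  define n where "n = card L"
  have LV: "L \<subseteq> V" unfolding L_def leaves_def by auto
  have finL: "finite L" using LV finV finite_subset by auto
  have n2: "real n \<ge> 2" using assms(2) unfolding n_def L_def by auto
  define q where "q = - Q i i"
  define F where "F x = {\<omega>\<in>space M. X x \<omega> = j}" for x
  have FS: "F x \<in> sets M" if "x \<in> V" for x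
  proof -
    have "F x = X x -` {j} \<inter> space M" unfolding F_def by auto
    thus ?thesis using meas that by (auto intro: measurable_sets)
  qed
  define c where "c x y = measure M (F x \<inter> F y) - measure M (F x) * measure M (F y)" for x y
  define sl where "sl x y = shared_len par rho len x y" for x y
  have var: "prob_space.variance M (leaf_count V par rho X j) = (\<Sum>x\<in>L. \<Sum>y\<in>L. c x y)"
    unfolding c_def
  proof (rule var_expand[OF ps finL])
    show "\<And>x. x \<in> L \<Longrightarrow> F x \<in> sets M" using FS LV by auto
    fix \<omega> assume w: "\<omega> \<in> space M"
    have "leaf_count V par rho X j \<omega> = (\<Sum>x\<in>L. if X x \<omega> = j then 1 else 0)"
      unfolding leaf_count_def L_def[symmetric]
      using sum.inter_filter[OF finL, of "\<lambda>_. 1::real" "\<lambda>x. X x \<omega> = j"] by simp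
    also have "\<dots> = (\<Sum>x\<in>L. indicator (F x) \<omega>)" using w by (intro sum.cong) (auto simp: F_def indicator_def)
    finally show "leaf_count V par rho X j \<omega> = (\<Sum>x\<in>L. indicator (F x) \<omega>)" .
  qed
  have diag: "c x x \<le> 1/4" for x
  proof -
    have "c x x = measure M (F x) - (measure M (F x))\<^sup>2" unfolding c_def by (simp add: power2_eq_square)
    also have "\<dots> \<le> 1/4"
    proof -
      have "0 \<le> (measure M (F x) - 1/2)\<^sup>2" by simp
      moreover have "(measure M (F x) - 1/2)\<^sup>2 = (measure M (F x))\<^sup>2 - measure M (F x) + 1/4"
        by (simp add: power2_eq_square algebra_simps)
      ultimately show ?thesis by linarith
    qed
    finally show ?thesis .
  qed
  define K where "K = max q 1"
  have K1: "K \<ge> 1" unfolding K_def by auto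
  have slnn: "sl x y \<ge> 0" if "x \<in> V" for x y
  proof -
    have "anc par x \<subseteq> V" using anc_sub[OF parV that] .
    thus ?thesis unfolding sl_def shared_len_def using lenp by (intro sum_nonneg) (auto intro: less_imp_le)
  qed
  have off: "c x y \<le> 2 * K * min (sl x y) 1" if xy: "x \<in> V" "y \<in> V" for x y
  proof (cases "sl x y \<ge> 1")
    case True
    have "c x y \<le> measure M (F x \<inter> F y)" unfolding c_def by simp
    also have "\<dots> \<le> 1" by simp
    also have "\<dots> \<le> 2 * K * min (sl x y) 1" using True K1 by simp
    finally show ?thesis .
  next
    case False
    define S where "S = (anc par x \<inter> anc par y) - {rho}"
    have SV: "S \<subseteq> V - {rho}" unfolding S_def using anc_sub[OF parV xy(1)] by auto
    have finS: "finite S" using SV finV finite_subset by auto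
    have "c x y \<le> 2 * (1 - (\<Prod>v\<in>S. P (len v) i i))"
      unfolding c_def F_def S_def by (rule cov_bound[OF tree tf tc xy])
    also have "1 - (\<Prod>v\<in>S. P (len v) i i) \<le> (\<Sum>v\<in>S. 1 - P (len v) i i)"
    proof (rule one_minus_prod[OF finS])
      fix v assume "v \<in> S"
      hence "len v \<ge> 0" using SV lenp by (auto intro: less_imp_le)
      thus "0 \<le> P (len v) i i \<and> P (len v) i i \<le> 1" using tf_nonneg[OF tf] tf_le1[OF tf] by auto
    qed
    also have "\<dots> \<le> (\<Sum>v\<in>S. q * len v)"
      by (rule sum_mono) (use SV lenp tf_linear[OF tf hq] in \<open>auto simp: q_def mult.commute\<close>)
    also have "\<dots> = q * sl x y" unfolding sl_def shared_len_def S_def by (simp add: sum_distrib_left)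
    also have "q * sl x y \<le> K * sl x y" unfolding K_def using slnn[OF xy(1)] by (intro mult_right_mono) auto
    finally show ?thesis using False by simp
  qed
  define T where "T = (\<Sum>x\<in>L. \<Sum>y\<in>L-{x}. min (sl x y) 1)"
  have Tnn: "T \<ge> 0" unfolding T_def using slnn LV by (intro sum_nonneg) auto
  have pairs: "{(x,y). x \<in> L \<and> y \<in> L \<and> x \<noteq> y} = Sigma L (\<lambda>x. L - {x})" by auto
  have spr: "spread V par rho len = T / (real n * (real n - 1))"
    unfolding spread_def Let_def L_def[symmetric] n_def[symmetric] pairs T_def sl_def
    using finL by (subst sum.Sigma) auto
  have nn: "real n * (real n - 1) > 0" using n2 by auto
  have d: "real n * (real n - 1) \<noteq> 0" using nn by linarith
  have Teq: "T = spread V par rho len * (real n * (real n - 1))" unfolding spr using d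
    by (metis times_divide_eq_left nonzero_mult_div_cancel_right)
  have sprnn: "spread V par rho len \<ge> 0" using spr Tnn nn by simp
  have "prob_space.variance M (leaf_count V par rho X j) = (\<Sum>x\<in>L. \<Sum>y\<in>L. c x y)" by (rule var)
  also have "\<dots> = (\<Sum>x\<in>L. c x x + (\<Sum>y\<in>L-{x}. c x y))"
    using finL by (intro sum.cong refl) (simp add: sum.remove)
  also have "\<dots> \<le> (\<Sum>x\<in>L. 1/4 + (\<Sum>y\<in>L-{x}. 2 * K * min (sl x y) 1))"
    using diag off LV by (intro sum_mono add_mono) auto
  also have "\<dots> = real n / 4 + 2 * K * T"
    unfolding T_def n_def by (simp add: sum.distrib sum_distrib_left)
  also have "2 * K * T \<le> 2 * K * (spread V par rho len * real n ^ 2)"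
  proof -
    have "real n * (real n - 1) \<le> real n ^ 2" by (simp add: power2_eq_square algebra_simps)
    hence "T \<le> spread V par rho len * real n ^ 2" unfolding Teq using sprnn by (intro mult_left_mono) auto
    thus ?thesis using K1 by auto
  qed
  finally show ?thesis unfolding n_def L_def K_def q_def by (simp add: algebra_simps)
qed



end
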